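(* Let $M\ge2$ and $\mathfrak{F}_M=\{\pi/M,2\pi/M,\dots,(M-1)\pi/M\}$. Let $K=\kappa^N$ be a complex parameter and, for $\phi\in\mathfrak{F}_M$, set (with a fixed choice of square root) $$\Delta_\phi=e^{i\phi}\big(\sqrt{\cos^2\phi+K}+\cos\phi\big),\quad \Delta^*_\phi=e^{-i\phi}\big(\sqrt{\cos^2\phi+K}+\cos\phi\big),\quad \Lambda_\phi=\Delta_\phi\Delta^*_\phi .$$ Let $1\le n\le M-1$ and let $\phi_1,\dots,\phi_n$ be distinct elements of $\mathfrak{F}_M$; write $\Delta_k=\Delta_{\phi_k}$, $\Delta_k^*=\Delta^*_{\phi_k}$, $\Lambda_k=\Lambda_{\phi_k}$, and assume $K$ and $\xi\in\mathbb{C}$ are generic so that all denominators below are nonzero. Define the phase shifts $d_{j,k}=\frac{(\Delta_j-\Delta_k)(\Delta_j^*-\Delta_k^* )}{(\Delta_j-\Delta_k^* )(\Delta_j^*-\Delta_k)}$, and for amplitudes $f_1,\dots,f_n$ and integer $m$ define recursively $\Theta^{(0)}_m=1$ and $$\Theta^{(n)}_m(\{f_k,\phi_k\}_{k=1}^n)=\Theta^{(n-1)}_m(\{f_k,\phi_k\}_{k=1}^{n-1})-f_n e^{2im\phi_n}\,\Theta^{(n-1)}_m(\{d_{k,n}f_k,\phi_k\}_{k=1}^{n-1}).$$ Let $s_k(\xi)=\frac{\Delta_k^*}{\Delta_k}\frac{\Delta_k-\xi}{\Delta_k^*-\xi}$, $s_{k,j}=s_k(\Delta_j^* )$, and define $\Theta^{(n)}_m(\xi)=\Theta^{(n)}_m(\{f_k,\phi_k\}_{k=1}^n)$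 with $f_k=s_k(\xi)\prod_{j=1,\,j\ne k}^n s_{k,j}$. Then $$\Theta^{(n)}_n(\xi)=\prod_{k=1}^n\frac{\Delta_k^*-\Delta_k}{\Delta_k^*-\xi}\prod_{1\le j<k\le n}\frac{\Lambda_j-\Lambda_k}{\Delta_j^*-\Delta_k^*},$$ and for $m=0,1,\dots,n$ $$\Theta^{(n)}_m(\xi)=(-K)^{(n-m)(n-m-1)/2}\left(\frac{\xi}{\Delta_1\cdots\Delta_n}\right)^{n-m}\Theta^{(n)}_n(\xi).$$ Moreover, if $\xi=1$, the last formula also holds for $m=-1$.
   Context: Here $\Delta_\phi,\Delta^*_\phi$ parametrize the curve $\Delta\Delta^*=\Delta+\Delta^*+\kappa^N$ with $e^{2i\phi}=\Delta/\Delta^*$ (this holds for either choice of the square root). In the recursion, the functions $\Theta^{(n-1)}_m$ are evaluated at the modified amplitude lists indicated (the amplitudes are treated as formal arguments). *)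

theory Defs
  imports Complex_Main
begin

text \<open>Delta_phi and Delta^*_phi, given a square root r of cos^2 phi + K.\<close>
definition Dlt :: "real \<Rightarrow> complex \<Rightarrow> complex" where
  "Dlt \<phi> r = exp (\<i> * of_real \<phi>) * (r + of_real (cos \<phi>))"

definition Dlts :: "real \<Rightarrow> complex \<Rightarrow> complex" where
  "Dlts \<phi> r = exp (- \<i> * of_real \<phi>) * (r + of_real (cos \<phi>))"

definition dsh :: "(nat \<Rightarrow> complex) \<Rightarrow> (nat \<Rightarrow> complex) \<Rightarrow> nat \<Rightarrow> nat \<Rightarrow> complex" where
  "dsh D Ds j k = ((D j - D k) * (Ds j - Ds k)) / ((D j - Ds k) * (Ds j - D k))"

text \<open>Theta^{(n)}_m({f_k, phi_k}_{k=1}^n); amplitudes f indexed 1..n.\<close>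
fun Theta :: "(nat \<Rightarrow> complex) \<Rightarrow> (nat \<Rightarrow> complex) \<Rightarrow> (nat \<Rightarrow> real) \<Rightarrow> nat \<Rightarrow> int
              \<Rightarrow> (nat \<Rightarrow> complex) \<Rightarrow> complex" where
  "Theta D Ds \<phi> 0 m f = 1"
| "Theta D Ds \<phi> (Suc n) m f =
     Theta D Ds \<phi> n m f
     - f (Suc n) * exp (2 * \<i> * of_int m * of_real (\<phi> (Suc n)))
       * Theta D Ds \<phi> n m (\<lambda>k. dsh D Ds k (Suc n) * f k)"

definition sfun :: "(nat \<Rightarrow> complex) \<Rightarrow> (nat \<Rightarrow> complex) \<Rightarrow> nat \<Rightarrow> complex \<Rightarrow> complex" where
  "sfun D Ds k \<xi> = (Ds k / D k) * ((D k - \<xi>) / (Ds k - \<xi>))"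

definition ampl :: "(nat \<Rightarrow> complex) \<Rightarrow> (nat \<Rightarrow> complex) \<Rightarrow> nat \<Rightarrow> complex \<Rightarrow> nat \<Rightarrow> complex" where
  "ampl D Ds n \<xi> k = sfun D Ds k \<xi> * (\<Prod>j\<in>{1..n} - {k}. sfun D Ds k (Ds j))"

end

theory Submission
  imports Defs "Jordan_Normal_Form.Determinant"
begin


lemma det_rows_scale:
  "det (mat m m (\<lambda>(k,i). (c k :: 'a::comm_ring_1) * A k i)) = (\<Prod>k<m. c k) * det (mat m m (\<lambda>(k,i). A k i))"
proof -
  have c1: "mat m m (\<lambda>(k,i). c k * A k i) \<in> carrier_mat m m" by simp
  have c2: "mat m m (\<lambda>(k,i). A k i) \<in> carrier_mat m m" by simp
  show ?thesis
    unfolding det_def'[OF c1] det_def'[OF c2] sum_distrib_left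
  proof (rule sum.cong[OF refl])
    fix p assume "p \<in> {p. p permutes {0..<m}}"
    hence p: "p permutes {0..<m}" by simp
    have "(\<Prod>i = 0..<m. mat m m (\<lambda>(k,i). c k * A k i) $$ (i, p i)) = (\<Prod>i = 0..<m. c i * A i (p i))"
      by (rule prod.cong, simp, insert permutes_in_image[OF p], auto)
    also have "\<dots> = (\<Prod>k<m. c k) * (\<Prod>i = 0..<m. A i (p i))"
      unfolding prod.distrib by (simp add: atLeast0LessThan)
    also have "(\<Prod>i = 0..<m. A i (p i)) = (\<Prod>i = 0..<m. mat m m (\<lambda>(k,i). A k i) $$ (i, p i))"
      by (rule prod.cong, simp, insert permutes_in_image[OF p], auto)
    finally show "signof p * (\<Prod>i = 0..<m. mat m m (\<lambda>(k,i). c k * A k i) $$ (i, p i)) =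
         (\<Prod>k<m. c k) * (signof p * (\<Prod>i = 0..<m. mat m m (\<lambda>(k,i). A k i) $$ (i, p i)))" by simp
  qed
qed

lemma vandermonde:
  "det (mat n n (\<lambda>(k,i). (x k :: 'a::comm_ring_1) ^ i)) = (\<Prod>k<n. \<Prod>j<k. x k - x j)"
proof (induction n arbitrary: x)
  case 0
  then show ?case by simp
next
  case (Suc m)
  let ?n = "Suc m"
  define V where "V = mat ?n ?n (\<lambda>(k,i). x k ^ i)"
  define U where "U = mat ?n ?n (\<lambda>(l,i). if l = i then 1 else if Suc l = i then - x 0 else (0::'a))"
  have V: "V \<in> carrier_mat ?n ?n" and U: "U \<in> carrier_mat ?n ?n" unfolding V_def U_def by auto
  have dims: "dim_row V = ?n" "dim_col U = ?n" unfolding V_def U_def by auto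
  have dU: "det U = 1"
  proof -
    have "det U = prod_list (diag_mat U)"
      by (rule det_upper_triangular[OF _ U], auto simp: U_def upper_triangular_def)
    also have "\<dots> = 1" unfolding prod_list_diag_prod U_def by simp
    finally show ?thesis .
  qed
  have VU: "(V * U) $$ (k,i) = (if i = 0 then 1 else x k ^ i - x 0 * x k ^ (i - 1))"
    if "k < ?n" "i < ?n" for k i
  proof -
    have "(V * U) $$ (k,i) = (\<Sum>l<?n. x k ^ l * (if l = i then 1 else if Suc l = i then - x 0 else 0))"
      using that unfolding V_def U_def
      by (auto simp: scalar_prod_def atLeast0LessThan intro!: sum.cong)
    also have "\<dots> = (\<Sum>l<?n. (if l = i then x k ^ l else 0) + (if Suc l = i then - x 0 * x k ^ l else 0))"
      by (rule sum.cong, auto)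
    also have "\<dots> = x k ^ i + (\<Sum>l<?n. if Suc l = i then - x 0 * x k ^ l else 0)"
      using that by (simp add: sum.distrib)
    also have "(\<Sum>l<?n. if Suc l = i then - x 0 * x k ^ l else 0) = (if i = 0 then 0 else - x 0 * x k ^ (i - 1))"
    proof (cases i)
      case 0 then show ?thesis by simp
    next
      case (Suc i') 
      have "(\<Sum>l<?n. if Suc l = i then - x 0 * x k ^ l else 0) = (\<Sum>l<?n. if l = i' then - x 0 * x k ^ l else 0)"
        using Suc by (intro sum.cong, auto)
      also have "\<dots> = - x 0 * x k ^ i'" using Suc that by simp
      finally show ?thesis using Suc by simp
    qed
    finally show ?thesis by (cases i, auto)
  qed
  have VUc: "V * U \<in> carrier_mat ?n ?n" using V U by auto
  have "det V = det (V * U)" using det_mult[OF V U] dU by simp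
  also have "\<dots> = (\<Sum>j<?n. (V * U) $$ (0,j) * cofactor (V * U) 0 j)"
    by (rule laplace_expansion_row[OF VUc], simp)
  also have "\<dots> = cofactor (V * U) 0 0"
  proof -
    have "(\<Sum>j<?n. (V * U) $$ (0,j) * cofactor (V * U) 0 j) = (\<Sum>j<?n. if j = 0 then cofactor (V * U) 0 0 else 0)"
      by (rule sum.cong, simp, subst VU, auto simp: power_eq_if)
    then show ?thesis by simp
  qed
  also have "\<dots> = det (mat_delete (V * U) 0 0)" unfolding cofactor_def by simp
  also have "mat_delete (V * U) 0 0 = mat m m (\<lambda>(k,i). (x (Suc k) - x 0) * x (Suc k) ^ i)"
  proof (rule eq_matI)
    fix i j assume ij: "i < dim_row (mat m m (\<lambda>(k,i). (x (Suc k) - x 0) * x (Suc k) ^ i))"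
       "j < dim_col (mat m m (\<lambda>(k,i). (x (Suc k) - x 0) * x (Suc k) ^ i))"
    have "mat_delete (V * U) 0 0 $$ (i,j) = (V*U) $$ (Suc i, Suc j)" using VUc ij
      by (simp add: mat_delete_def insert_index_def dims del: index_mult_mat)
    also have "\<dots> = (x (Suc i) - x 0) * x (Suc i) ^ j" using ij by (subst VU, auto simp: algebra_simps)
    finally show "mat_delete (V * U) 0 0 $$ (i,j) = mat m m (\<lambda>(k,i). (x (Suc k) - x 0) * x (Suc k) ^ i) $$ (i,j)"
      using ij by simp
  qed (insert dims, auto simp: mat_delete_def)
  also have "det \<dots> = (\<Prod>k<m. x (Suc k) - x 0) * det (mat m m (\<lambda>(k,i). x (Suc k) ^ i))"
    by (rule det_rows_scale)
  also have "\<dots> = (\<Prod>k<m. x (Suc k) - x 0) * (\<Prod>k<m. \<Prod>j<k. x (Suc k) - x (Suc j))"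
    using Suc.IH[of "\<lambda>k. x (Suc k)"] by simp
  also have "\<dots> = (\<Prod>k<?n. \<Prod>j<k. x k - x j)"
    by (simp add: prod.lessThan_Suc_shift prod.distrib del: prod.lessThan_Suc)
  finally show ?case unfolding V_def .
qed


definition ee :: "(nat \<Rightarrow> real) \<Rightarrow> int \<Rightarrow> nat \<Rightarrow> complex" where
  "ee \<phi> m k = exp (2 * \<i> * of_int m * of_real (\<phi> k))"

lemma theta_expand:
  "Theta D Ds \<phi> n m f = (\<Sum>S\<in>Pow {1..n}. (-1)^card S * (\<Prod>k\<in>S. f k * ee \<phi> m k)
      * (\<Prod>k\<in>S. \<Prod>j\<in>S\<inter>{..<k}. dsh D Ds j k))"
proof (induction n arbitrary: f)
  case 0
  then show ?case by simp
next
  case (Suc n)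
  let ?t = "\<lambda>f S. (-1::complex)^card S * (\<Prod>k\<in>S. f k * ee \<phi> m k) * (\<Prod>k\<in>S. \<Prod>j\<in>S\<inter>{..<k}. dsh D Ds j k)"
  let ?g = "\<lambda>k. dsh D Ds k (Suc n) * f k"
  have P: "Pow {1..Suc n} = Pow {1..n} \<union> insert (Suc n) ` Pow {1..n}"
    by (simp add: atLeastAtMostSuc_conv Pow_insert)
  have disj: "Pow {1..n} \<inter> insert (Suc n) ` Pow {1..n} = {}" by auto
  have inj: "inj_on (insert (Suc n)) (Pow {1..n})"
    by (rule inj_onI) (metis Pow_iff atLeastAtMost_iff insert_ident not_less_eq_eq order_refl subset_iff)
  have T: "?t f (insert (Suc n) T) = - (f (Suc n) * ee \<phi> m (Suc n)) * ?t ?g T" if T: "T \<in> Pow {1..n}" for T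
  proof -
    have fin: "finite T" and nT: "Suc n \<notin> T" using T finite_subset by (auto intro: finite_subset[of T "{1..n}"])
    have c: "card (insert (Suc n) T) = Suc (card T)" using fin nT by simp
    have p1: "(\<Prod>k\<in>insert (Suc n) T. f k * ee \<phi> m k) = f (Suc n) * ee \<phi> m (Suc n) * (\<Prod>k\<in>T. f k * ee \<phi> m k)"
      using fin nT by simp
    have p2: "(\<Prod>k\<in>insert (Suc n) T. \<Prod>j\<in>insert (Suc n) T\<inter>{..<k}. dsh D Ds j k)
       = (\<Prod>j\<in>T. dsh D Ds j (Suc n)) * (\<Prod>k\<in>T. \<Prod>j\<in>T\<inter>{..<k}. dsh D Ds j k)"
    proof -
      have a: "insert (Suc n) T \<inter> {..<Suc n} = T" using T by auto
      have b: "(\<Prod>k\<in>T. \<Prod>j\<in>insert (Suc n) T\<inter>{..<k}. dsh D Ds j k) = (\<Prod>k\<in>T. \<Prod>j\<in>T\<inter>{..<k}. dsh D Ds j k)"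
        by (rule prod.cong[OF refl], rule prod.cong, insert T, auto)
      show ?thesis using fin nT a b by simp
    qed
    have p3: "(\<Prod>k\<in>T. ?g k * ee \<phi> m k) = (\<Prod>j\<in>T. dsh D Ds j (Suc n)) * (\<Prod>k\<in>T. f k * ee \<phi> m k)"
      by (simp add: prod.distrib mult.assoc)
    show ?thesis unfolding c p1 p2 p3 by (simp add: algebra_simps)
  qed
  have "Theta D Ds \<phi> (Suc n) m f = (\<Sum>S\<in>Pow {1..n}. ?t f S) - f (Suc n) * ee \<phi> m (Suc n) * (\<Sum>S\<in>Pow {1..n}. ?t ?g S)"
    using Suc.IH[of f] Suc.IH[of ?g] by (simp add: ee_def)
  also have "\<dots> = (\<Sum>S\<in>Pow {1..n}. ?t f S) + (\<Sum>S\<in>insert (Suc n) ` Pow {1..n}. ?t f S)"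
    by (subst sum.reindex[OF inj], simp add: T sum_distrib_left sum_negf)
  also have "\<dots> = (\<Sum>S\<in>Pow {1..Suc n}. ?t f S)"
    unfolding P by (rule sum.union_disjoint[symmetric], auto)
  finally show ?case .
qed


lemma swap_pairs:
  "(\<Prod>k\<in>{1..n}. \<Prod>j\<in>{k<..n}. g k j) = (\<Prod>k\<in>{1..(n::nat)}. \<Prod>j\<in>{1..<k}. (g j k :: 'a::comm_monoid_mult))"
proof -
  have "(\<Prod>k\<in>{1..n}. \<Prod>j\<in>{k<..n}. g k j) = (\<Prod>x\<in>{1..n}. prod (g x) {y\<in>{1..n}. x < y})"
    by (rule prod.cong[OF refl], rule prod.cong, auto)
  also have "\<dots> = (\<Prod>y\<in>{1..n}. \<Prod>x | x \<in> {1..n} \<and> x < y. g x y)"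
    by (rule prod.swap_restrict, auto)
  also have "\<dots> = (\<Prod>k\<in>{1..(n::nat)}. \<Prod>j\<in>{1..<k}. g j k)"
    by (rule prod.cong[OF refl], rule prod.cong, auto)
  finally show ?thesis .
qed

lemma split_ne:
  assumes "k \<in> {1..n}"
  shows "(\<Prod>j\<in>{1..n}-{k}. g j) = (\<Prod>j\<in>{1..<k}. g j) * (\<Prod>j\<in>{k<..(n::nat)}. (g j :: 'a::comm_monoid_mult))"
proof -
  have "{1..n}-{k} = {1..<k} \<union> {k<..n}" using assms by auto
  moreover have "prod g ({1..<k} \<union> {k<..n}) = prod g {1..<k} * prod g {k<..n}"
    by (rule prod.union_disjoint) auto
  ultimately show ?thesis by simp
qed

lemma ordered_pairs:
  "(\<Prod>k\<in>{1..(n::nat)}. \<Prod>j\<in>{1..n}-{k}. g k j) =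
   (\<Prod>k\<in>{1..n}. \<Prod>j\<in>{1..<k}. g k j * (g j k :: 'a::comm_monoid_mult))"
proof -
  have "(\<Prod>k\<in>{1..n}. \<Prod>j\<in>{1..n}-{k}. g k j) = (\<Prod>k\<in>{1..n}. (\<Prod>j\<in>{1..<k}. g k j) * (\<Prod>j\<in>{k<..n}. g k j))"
  proof (rule prod.cong[OF refl])
    fix k assume "k \<in> {1..n}"
    then show "(\<Prod>j\<in>{1..n}-{k}. g k j) = (\<Prod>j\<in>{1..<k}. g k j) * (\<Prod>j\<in>{k<..n}. g k j)"
      using split_ne[of k n "g k"] by simp
  qed
  also have "\<dots> = (\<Prod>k\<in>{1..n}. \<Prod>j\<in>{1..<k}. g k j) * (\<Prod>k\<in>{1..n}. \<Prod>j\<in>{k<..n}. g k j)"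
    by (rule prod.distrib)
  also have "\<dots> = (\<Prod>k\<in>{1..n}. \<Prod>j\<in>{1..<k}. g k j) * (\<Prod>k\<in>{1..n}. \<Prod>j\<in>{1..<k}. g j k)"
    by (simp only: swap_pairs)
  finally show ?thesis by (simp add: prod.distrib)
qed

lemma prod_restrict_S: "S \<subseteq> N \<Longrightarrow> finite N \<Longrightarrow> (\<Prod>k\<in>N. if k \<in> S then G k else 1) = prod G S"
proof -
  assume "S \<subseteq> N" "finite N"
  then have "N \<inter> S = S" by auto
  then show ?thesis using prod.inter_restrict[OF \<open>finite N\<close>, of G S] by simp
qed

lemma pair_id: fixes ak aj bk bj :: complex
  assumes "ak \<noteq> 0" "aj \<noteq> 0" "aj \<noteq> bk" "bj \<noteq> bk" "ak \<noteq> bj"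
  shows "(bk / ak * ((ak - bj) / (bk - bj))) * (bj / aj * ((aj - bk) / (bj - bk)))
   * ((aj - ak) * (bj - bk) / ((aj - bk) * (bj - ak)))
   = (ak - aj) / (bk - bj) * (bk / ak * (bj / aj))"
proof -
  have 1: "bj - ak \<noteq> 0" "aj - bk \<noteq> 0" "bk - bj \<noteq> 0" "bj - bk \<noteq> 0" using assms by auto
  define u where "u = bj - ak"
  define v where "v = aj - bk"
  define w where "w = bj - bk"
  have e: "ak - bj = - u" "bk - bj = - w" "aj - bk = v" "bj - bk = w" "bj - ak = u" unfolding u_def v_def w_def by simp_all
  have nz: "u \<noteq> 0" "v \<noteq> 0" "w \<noteq> 0" using 1 unfolding u_def v_def w_def by auto
  show ?thesis unfolding e using nz assms by (simp add: field_simps)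
qed

definition cS :: "(nat \<Rightarrow> complex) \<Rightarrow> (nat \<Rightarrow> complex) \<Rightarrow> nat set \<Rightarrow> nat \<Rightarrow> complex" where
  "cS a b S k = (if k \<in> S then a k else b k)"

definition VV :: "nat \<Rightarrow> (nat \<Rightarrow> complex) \<Rightarrow> complex" where
  "VV n x = (\<Prod>k\<in>{1..n}. \<Prod>j\<in>{1..<k}. x k - x j)"

lemma pair_prod:
  fixes a b :: "nat \<Rightarrow> complex"
  assumes S: "S \<subseteq> {1..n}"
    and a0: "\<forall>k\<in>{1..n}. a k \<noteq> 0"
    and nz: "\<forall>j\<in>{1..n}. \<forall>k\<in>{1..n}. j \<noteq> k \<longrightarrow> a j \<noteq> b k \<and> b j \<noteq> b k"
  shows "(\<Prod>k\<in>S. \<Prod>j\<in>{1..n}-{k}. sfun a b k (b j)) * (\<Prod>k\<in>S. \<Prod>j\<in>S\<inter>{..<k}. dsh a b j k)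
       = (\<Prod>k\<in>S. (b k / a k)^(n-1)) * (VV n (cS a b S) / VV n b)"
proof -
  let ?N = "{1..n}"
  define X where "X k j = (if k \<in> S then sfun a b k (b j) else 1)" for k j
  define Y where "Y k = (if k \<in> S then b k / a k else 1)" for k
  define Z where "Z j k = (if j \<in> S \<and> k \<in> S then dsh a b j k else 1)" for j k
  have A: "(\<Prod>k\<in>S. \<Prod>j\<in>?N-{k}. sfun a b k (b j)) = (\<Prod>k\<in>?N. \<Prod>j\<in>{1..<k}. X k j * X j k)"
  proof -
    have "(\<Prod>k\<in>?N. \<Prod>j\<in>?N-{k}. X k j) = (\<Prod>k\<in>?N. if k \<in> S then (\<Prod>j\<in>?N-{k}. sfun a b k (b j)) else 1)"
      by (rule prod.cong[OF refl], simp add: X_def)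
    also have "\<dots> = (\<Prod>k\<in>S. \<Prod>j\<in>?N-{k}. sfun a b k (b j))"
      by (rule prod_restrict_S[OF S], simp)
    finally have "(\<Prod>k\<in>S. \<Prod>j\<in>?N-{k}. sfun a b k (b j)) = (\<Prod>k\<in>?N. \<Prod>j\<in>?N-{k}. X k j)" by simp
    then show ?thesis using ordered_pairs[of X n] by simp
  qed
  have B: "(\<Prod>k\<in>S. \<Prod>j\<in>S\<inter>{..<k}. dsh a b j k) = (\<Prod>k\<in>?N. \<Prod>j\<in>{1..<k}. Z j k)"
  proof -
    have "(\<Prod>k\<in>?N. \<Prod>j\<in>{1..<k}. Z j k) = (\<Prod>k\<in>?N. if k \<in> S then (\<Prod>j\<in>{1..<k}. if j \<in> S then dsh a b j k else 1) else 1)"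
      unfolding Z_def by (rule prod.cong, auto)
    also have "\<dots> = (\<Prod>k\<in>S. (\<Prod>j\<in>{1..<k}. if j \<in> S then dsh a b j k else 1))"
      by (rule prod_restrict_S[OF S], simp)
    also have "\<dots> = (\<Prod>k\<in>S. \<Prod>j\<in>S\<inter>{..<k}. dsh a b j k)"
    proof (rule prod.cong[OF refl])
      fix k assume "k \<in> S"
      have "{1..<k} \<inter> S = S \<inter> {..<k}" using S by auto
      then show "(\<Prod>j\<in>{1..<k}. if j \<in> S then dsh a b j k else 1) = (\<Prod>j\<in>S\<inter>{..<k}. dsh a b j k)"
        using prod.inter_restrict[of "{1..<k}" "\<lambda>j. dsh a b j k" S] by simp
    qed
    finally show ?thesis by simp
  qed
  have C: "(\<Prod>k\<in>S. (b k / a k)^(n-1)) = (\<Prod>k\<in>?N. \<Prod>j\<in>{1..<k}. Y k * Y j)"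
  proof -
    have "(\<Prod>k\<in>S. (b k / a k)^(n-1)) = (\<Prod>k\<in>?N. (Y k)^(n-1))"
    proof -
      have "(\<Prod>k\<in>?N. (Y k)^(n-1)) = (\<Prod>k\<in>?N. if k \<in> S then (b k / a k)^(n-1) else 1)"
        by (rule prod.cong[OF refl], simp add: Y_def)
      then show ?thesis using prod_restrict_S[OF S, of "\<lambda>k. (b k / a k)^(n-1)"] by simp
    qed
    also have "\<dots> = (\<Prod>k\<in>?N. \<Prod>j\<in>?N-{k}. Y k)"
      by (rule prod.cong, auto)
    finally show ?thesis using ordered_pairs[of "\<lambda>k j. Y k" n] by simp
  qed
  have D: "VV n (cS a b S) / VV n b = (\<Prod>k\<in>?N. \<Prod>j\<in>{1..<k}. (cS a b S k - cS a b S j) / (b k - b j))"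
    unfolding VV_def by (simp add: prod_dividef)
  have E: "X k j * X j k * Z j k = (Y k * Y j) * ((cS a b S k - cS a b S j) / (b k - b j))"
    if k: "k \<in> ?N" and j: "j \<in> {1..<k}" for j k
  proof -
    have jN: "j \<in> ?N" and jk: "j \<noteq> k" using j k by auto
    have ak: "a k \<noteq> 0" and aj: "a j \<noteq> 0" using a0 k jN by auto
    have n1: "a j \<noteq> b k" "b j \<noteq> b k" "a k \<noteq> b j" "b k \<noteq> b j" using nz k jN jk by auto
    have n2: "a j - b k \<noteq> 0" "b j - b k \<noteq> 0" "a k - b j \<noteq> 0" "b k - b j \<noteq> 0" "b j - a k \<noteq> 0"
      using n1 by auto
    show ?thesis
    proof (cases "k \<in> S"; cases "j \<in> S")
      assume "k \<in> S" "j \<in> S"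
      then show ?thesis unfolding X_def Y_def Z_def cS_def sfun_def dsh_def
        using pair_id[of "a k" "a j" "b k" "b j"] ak aj n1 by (simp add: mult.commute)
    next
      assume "k \<in> S" "j \<notin> S"
      then show ?thesis unfolding X_def Y_def Z_def cS_def sfun_def dsh_def
        using ak aj n2 by (simp add: field_simps)
    next
      assume "k \<notin> S" "j \<in> S"
      then show ?thesis unfolding X_def Y_def Z_def cS_def sfun_def dsh_def
        using ak aj n2 by (simp add: field_simps)
    next
      assume "k \<notin> S" "j \<notin> S"
      then show ?thesis unfolding X_def Y_def Z_def cS_def sfun_def dsh_def
        using ak aj n2 by (simp add: field_simps)
    qed
  qed
  have "(\<Prod>k\<in>S. \<Prod>j\<in>?N-{k}. sfun a b k (b j)) * (\<Prod>k\<in>S. \<Prod>j\<in>S\<inter>{..<k}. dsh a b j k)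
      = (\<Prod>k\<in>?N. \<Prod>j\<in>{1..<k}. X k j * X j k * Z j k)"
    unfolding A B by (simp add: prod.distrib)
  also have "\<dots> = (\<Prod>k\<in>?N. \<Prod>j\<in>{1..<k}. (Y k * Y j) * ((cS a b S k - cS a b S j) / (b k - b j)))"
    by (rule prod.cong[OF refl], rule prod.cong[OF refl], rule E, auto)
  also have "\<dots> = (\<Prod>k\<in>S. (b k / a k)^(n-1)) * (VV n (cS a b S) / VV n b)"
    unfolding C D by (simp only: prod.distrib)
  finally show ?thesis .
qed


lemma per_sigma:
  fixes \<alpha> \<beta> a b :: "nat \<Rightarrow> complex" and e :: "nat \<Rightarrow> nat"
  shows "(\<Prod>k\<in>{1..n}. \<beta> k * b k ^ e k - \<alpha> k * a k ^ e k) =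
    (\<Sum>S\<in>Pow {1..n}. (-1)^card S * (\<Prod>k\<in>S. \<alpha> k) * (\<Prod>k\<in>{1..n}-S. \<beta> k) * (\<Prod>k\<in>{1..n}. cS a b S k ^ e k))"
proof -
  let ?N = "{1..n}"
  have "(\<Prod>k\<in>?N. \<beta> k * b k ^ e k - \<alpha> k * a k ^ e k) = (\<Prod>k\<in>?N. (- \<alpha> k * a k ^ e k) + \<beta> k * b k ^ e k)"
    by simp
  also have "\<dots> = (\<Sum>S\<in>Pow ?N. (\<Prod>k\<in>S. - \<alpha> k * a k ^ e k) * (\<Prod>k\<in>?N - S. \<beta> k * b k ^ e k))"
    by (rule prod_add, simp)
  also have "\<dots> = (\<Sum>S\<in>Pow ?N. (-1)^card S * (\<Prod>k\<in>S. \<alpha> k) * (\<Prod>k\<in>?N-S. \<beta> k) * (\<Prod>k\<in>?N. cS a b S k ^ e k))"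
  proof (rule sum.cong[OF refl])
    fix S assume "S \<in> Pow ?N"
    then have S: "S \<subseteq> ?N" by simp
    have fS: "finite S" using S finite_subset by blast
    have 1: "(\<Prod>k\<in>S. - \<alpha> k * a k ^ e k) = (-1)^card S * (\<Prod>k\<in>S. \<alpha> k) * (\<Prod>k\<in>S. a k ^ e k)"
    proof -
      have "(\<Prod>k\<in>S. - \<alpha> k * a k ^ e k) = (\<Prod>k\<in>S. (-1) * (\<alpha> k * a k ^ e k))" by simp
      also have "\<dots> = (-1)^card S * (\<Prod>k\<in>S. \<alpha> k * a k ^ e k)" by (simp only: prod.distrib prod_constant)
      finally show ?thesis by (simp add: prod.distrib mult.assoc)
    qed
    have 2: "(\<Prod>k\<in>?N - S. \<beta> k * b k ^ e k) = (\<Prod>k\<in>?N-S. \<beta> k) * (\<Prod>k\<in>?N-S. b k ^ e k)"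
      by (simp add: prod.distrib)
    have 3: "(\<Prod>k\<in>?N. cS a b S k ^ e k) = (\<Prod>k\<in>?N-S. b k ^ e k) * (\<Prod>k\<in>S. a k ^ e k)"
    proof -
      have "(\<Prod>k\<in>?N. cS a b S k ^ e k) = (\<Prod>k\<in>?N-S. cS a b S k ^ e k) * (\<Prod>k\<in>S. cS a b S k ^ e k)"
        by (rule prod.subset_diff[OF S], simp)
      also have "(\<Prod>k\<in>?N-S. cS a b S k ^ e k) = (\<Prod>k\<in>?N-S. b k ^ e k)"
        by (rule prod.cong, auto simp: cS_def)
      also have "(\<Prod>k\<in>S. cS a b S k ^ e k) = (\<Prod>k\<in>S. a k ^ e k)"
        by (rule prod.cong, auto simp: cS_def)
      finally show ?thesis .
    qed
    show "(\<Prod>k\<in>S. - \<alpha> k * a k ^ e k) * (\<Prod>k\<in>?N - S. \<beta> k * b k ^ e k) =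
      (-1)^card S * (\<Prod>k\<in>S. \<alpha> k) * (\<Prod>k\<in>?N-S. \<beta> k) * (\<Prod>k\<in>?N. cS a b S k ^ e k)"
      unfolding 1 2 3 by (simp add: ac_simps)
  qed
  finally show ?thesis .
qed

lemma det_expand:
  fixes \<alpha> \<beta> a b :: "nat \<Rightarrow> complex"
  shows "det (mat n n (\<lambda>(k,i). \<beta> (Suc k) * b (Suc k) ^ i - \<alpha> (Suc k) * a (Suc k) ^ i)) =
    (\<Sum>S\<in>Pow {1..n}. (-1)^card S * (\<Prod>k\<in>S. \<alpha> k) * (\<Prod>k\<in>{1..n}-S. \<beta> k) * det (mat n n (\<lambda>(k,i). cS a b S (Suc k) ^ i)))"
proof -
  let ?N = "{1..n}"
  let ?PU = "{p. p permutes {0..<n}}"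
  let ?c = "\<lambda>S. (-1)^card S * (\<Prod>k\<in>S. \<alpha> k) * (\<Prod>k\<in>{1..n}-S. \<beta> k)"
  have m1: "mat n n (\<lambda>(k,i). \<beta> (Suc k) * b (Suc k) ^ i - \<alpha> (Suc k) * a (Suc k) ^ i) \<in> carrier_mat n n" by simp
  have m2: "\<And>S. mat n n (\<lambda>(k,i). cS a b S (Suc k) ^ i) \<in> carrier_mat n n" by simp
  have conv: "(\<Prod>i = 0..<n. F (Suc i) (p i)) = (\<Prod>k\<in>?N. F k (p (k - 1)))" for F :: "nat \<Rightarrow> nat \<Rightarrow> complex" and p
    using prod.atLeast1_atMost_eq[of "\<lambda>k. F k (p (k - 1))" n] by (simp add: atLeast0LessThan)
  have "det (mat n n (\<lambda>(k,i). \<beta> (Suc k) * b (Suc k) ^ i - \<alpha> (Suc k) * a (Suc k) ^ i))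
      = (\<Sum>p\<in>?PU. signof p * (\<Prod>i = 0..<n. \<beta> (Suc i) * b (Suc i) ^ p i - \<alpha> (Suc i) * a (Suc i) ^ p i))"
    unfolding det_def'[OF m1]
    by (rule sum.cong[OF refl], rule arg_cong[where f = "\<lambda>x. _ * x"], rule prod.cong, auto)
  also have "\<dots> = (\<Sum>p\<in>?PU. signof p * (\<Sum>S\<in>Pow ?N. ?c S * (\<Prod>k\<in>?N. cS a b S k ^ p (k - 1))))"
    by (rule sum.cong[OF refl], subst conv[of "\<lambda>k i. \<beta> k * b k ^ i - \<alpha> k * a k ^ i"], subst per_sigma, simp)
  also have "\<dots> = (\<Sum>S\<in>Pow ?N. ?c S * (\<Sum>p\<in>?PU. signof p * (\<Prod>k\<in>?N. cS a b S k ^ p (k - 1))))"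
    by (simp add: sum_distrib_left sum.swap[of _ ?PU] ac_simps)
  also have "\<dots> = (\<Sum>S\<in>Pow ?N. ?c S * det (mat n n (\<lambda>(k,i). cS a b S (Suc k) ^ i)))"
  proof (rule sum.cong[OF refl])
    fix S
    have "(\<Sum>p\<in>?PU. signof p * (\<Prod>k\<in>?N. cS a b S k ^ p (k - 1))) = det (mat n n (\<lambda>(k,i). cS a b S (Suc k) ^ i))"
      unfolding det_def'[OF m2]
    proof (rule sum.cong[OF refl])
      fix p assume p: "p \<in> ?PU"
      have "(\<Prod>i = 0..<n. mat n n (\<lambda>(k,i). cS a b S (Suc k) ^ i) $$ (i, p i)) = (\<Prod>i = 0..<n. cS a b S (Suc i) ^ p i)"
        by (rule prod.cong, simp, insert p, auto simp: permutes_in_image)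
      then show "signof p * (\<Prod>k\<in>?N. cS a b S k ^ p (k - 1)) = signof p * (\<Prod>i = 0..<n. mat n n (\<lambda>(k,i). cS a b S (Suc k) ^ i) $$ (i, p i))"
        using conv[of "\<lambda>k i. cS a b S k ^ i" p] by simp
    qed
    then show "?c S * (\<Sum>p\<in>?PU. signof p * (\<Prod>k\<in>?N. cS a b S k ^ p (k - 1))) = ?c S * det (mat n n (\<lambda>(k,i). cS a b S (Suc k) ^ i))"
      by simp
  qed
  finally show ?thesis .
qed


fun HH :: "complex \<Rightarrow> nat \<Rightarrow> complex poly" where
  "HH K 0 = 0"
| "HH K (Suc 0) = 1"
| "HH K (Suc (Suc q)) = pCons 0 (HH K (Suc q)) - smult K (HH K (Suc q)) - pCons 0 (HH K q)"

lemma HH_eval: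
  assumes ab: "a * b = a + b + K"
  shows "(b - a) * poly (HH K q) (a * b) = b ^ q - a ^ q"
proof (induction q rule: induct_nat_012)
  case (ge2 q)
  have "(b - a) * poly (HH K (Suc (Suc q))) (a * b)
     = (a * b - K) * ((b - a) * poly (HH K (Suc q)) (a * b)) - a * b * ((b - a) * poly (HH K q) (a * b))"
    by (simp add: algebra_simps)
  also have "\<dots> = (a + b) * (b ^ Suc q - a ^ Suc q) - a * b * (b ^ q - a ^ q)"
    using ge2 ab by simp
  also have "\<dots> = b ^ Suc (Suc q) - a ^ Suc (Suc q)" by (simp add: algebra_simps)
  finally show ?case .
qed simp_all

lemma HH_coeff0: "coeff (HH K (Suc q)) 0 = (-K) ^ q"
  by (induction q rule: induct_nat_012) (simp_all add: coeff_pCons)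

lemma HH_deg: "degree (HH K q) \<le> q - 1 \<and> coeff (HH K (Suc q)) q = 1"
proof (induction q rule: induct_nat_012)
  case (ge2 q)
  have d: "degree (HH K (Suc (Suc q))) \<le> Suc q"
  proof -
    have "degree (pCons 0 (HH K (Suc q))) \<le> Suc q" using ge2 
      by (metis (no_types, lifting) Suc_le_mono degree_pCons_eq_if diff_Suc_1 le_zero_eq nat.distinct(1) zero_le)
    moreover have "degree (smult K (HH K (Suc q))) \<le> Suc q" using ge2
      by (metis degree_smult_le diff_Suc_1 le_SucI order.trans)
    moreover have "degree (pCons 0 (HH K q)) \<le> Suc q" using ge2
      by (metis Suc_le_mono degree_pCons_le diff_le_self le_SucI order.trans)
    ultimately show ?thesis by (simp add: degree_diff_le)
  qed
  have "coeff (HH K (Suc (Suc (Suc q)))) (Suc (Suc q)) = coeff (HH K (Suc (Suc q))) (Suc q) - K * coeff (HH K (Suc (Suc q))) (Suc (Suc q)) - coeff (HH K (Suc q)) (Suc q)"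
    by (subst HH.simps(3)) (simp only: coeff_diff coeff_pCons_Suc coeff_smult)
  also have "\<dots> = 1"
  proof -
    have "coeff (HH K (Suc (Suc q))) (Suc (Suc q)) = 0" using d by (simp add: coeff_eq_0 del: HH.simps)
    moreover have "coeff (HH K (Suc q)) (Suc q) = 0" using ge2 by (simp add: coeff_eq_0 del: HH.simps)
    ultimately show ?thesis using ge2 by (simp del: HH.simps)
  qed
  finally show ?case using d by (simp del: HH.simps)
qed (simp_all add: coeff_pCons)

definition EE :: "complex \<Rightarrow> complex \<Rightarrow> nat \<Rightarrow> nat \<Rightarrow> complex poly" where
  "EE K \<xi> p i = (if p \<le> i then monom 1 p * (HH K (i - p + 1) - smult \<xi> (HH K (i - p)))
     else monom 1 i * (smult \<xi> (HH K (p - i)) - pCons 0 (HH K (p - i - 1))))"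

definition EF :: "complex \<Rightarrow> nat \<Rightarrow> nat \<Rightarrow> complex poly" where
  "EF K n i = - (monom 1 i * (smult K (HH K (n - i)) + pCons 0 (HH K (n - i - 1))))"

lemma EE_eval:
  assumes ab: "a * b = a + b + K"
  shows "a ^ p * b ^ i * (b - \<xi>) - b ^ p * a ^ i * (a - \<xi>) = (b - a) * poly (EE K \<xi> p i) (a * b)"
proof (cases "p \<le> i")
  case True
  then obtain d where i: "i = p + d" using le_Suc_ex by blast
  have "(b - a) * poly (EE K \<xi> p i) (a * b) = (a * b) ^ p * ((b - a) * poly (HH K (Suc d)) (a * b) - \<xi> * ((b - a) * poly (HH K d) (a * b)))"
    unfolding EE_def using True i by (simp add: poly_monom algebra_simps del: HH.simps)
  also have "\<dots> = (a * b) ^ p * ((b ^ Suc d - a ^ Suc d) - \<xi> * (b ^ d - a ^ d))"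
    unfolding HH_eval[OF ab] ..
  also have "\<dots> = a ^ p * b ^ i * (b - \<xi>) - b ^ p * a ^ i * (a - \<xi>)"
    unfolding i by (simp add: power_add power_mult_distrib algebra_simps)
  finally show ?thesis by simp
next
  case False
  then obtain r where p: "p = i + Suc r" using False by (intro that[of "p - i - 1"]) simp
  have "(b - a) * poly (EE K \<xi> p i) (a * b) = (a * b) ^ i * (\<xi> * ((b - a) * poly (HH K (Suc r)) (a * b)) - a * b * ((b - a) * poly (HH K r) (a * b)))"
    unfolding EE_def using False p by (simp add: poly_monom algebra_simps del: HH.simps)
  also have "\<dots> = (a * b) ^ i * (\<xi> * (b ^ Suc r - a ^ Suc r) - a * b * (b ^ r - a ^ r))"
    unfolding HH_eval[OF ab] ..
  also have "\<dots> = a ^ p * b ^ i * (b - \<xi>) - b ^ p * a ^ i * (a - \<xi>)"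
    unfolding p by (simp add: power_add power_mult_distrib algebra_simps)
  finally show ?thesis by simp
qed

lemma EF_eval:
  assumes ab: "a * b = a + b + K" and i: "i < n"
  shows "a ^ Suc n * b ^ i * (b - 1) - b ^ Suc n * a ^ i * (a - 1) = (b - a) * poly (EF K n i) (a * b)"
proof -
  obtain r where n: "n = i + Suc r" using i by (intro that[of "n - i - 1"]) simp
  have "(b - a) * poly (EF K n i) (a * b) = - ((a * b) ^ i * (K * ((b - a) * poly (HH K (Suc r)) (a * b)) + a * b * ((b - a) * poly (HH K r) (a * b))))"
    unfolding EF_def using n by (simp add: poly_monom algebra_simps del: HH.simps)
  also have "\<dots> = - ((a * b) ^ i * (K * (b ^ Suc r - a ^ Suc r) + a * b * (b ^ r - a ^ r)))"
    unfolding HH_eval[OF ab] ..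
  also have "\<dots> = - ((a * b) ^ i * ((a * b - a - b) * (b ^ Suc r - a ^ Suc r) + a * b * (b ^ r - a ^ r)))"
    using ab by (simp add: algebra_simps)
  also have "\<dots> = a ^ Suc n * b ^ i * (b - 1) - b ^ Suc n * a ^ i * (a - 1)"
    unfolding n by (simp add: power_add power_mult_distrib algebra_simps)
  finally show ?thesis by simp
qed

lemma deg_HH_diff: "degree (HH K (Suc d) - smult \<xi> (HH K d)) \<le> d"
proof -
  have "degree (HH K (Suc d)) \<le> d" using HH_deg[of K "Suc d"] by simp
  moreover have "degree (smult \<xi> (HH K d)) \<le> d" using HH_deg[of K d]
    by (meson degree_smult_le diff_le_self order.trans)
  ultimately show ?thesis by (meson degree_diff_le)
qed

lemma deg_HH_diff2: "degree (smult \<xi> (HH K (Suc r)) - pCons 0 (HH K r)) \<le> r"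
proof -
  have "degree (HH K (Suc r)) \<le> r" using HH_deg[of K "Suc r"] by simp
  then have "degree (smult \<xi> (HH K (Suc r))) \<le> r"
    by (meson degree_smult_le order.trans)
  moreover have "degree (pCons 0 (HH K r)) \<le> r"
  proof (cases r)
    case 0 then show ?thesis by simp
  next
    case (Suc r')
    have "degree (HH K r) \<le> r'" using HH_deg[of K r] Suc by simp
    then show ?thesis using degree_pCons_le[of 0 "HH K r"] Suc by simp
  qed
  ultimately show ?thesis by (meson degree_diff_le)
qed

lemma deg_HH_sum3: "degree (smult K (HH K (Suc r)) + pCons 0 (HH K r)) \<le> r"
proof -
  have "degree (HH K (Suc r)) \<le> r" using HH_deg[of K "Suc r"] by simp
  then have "degree (smult K (HH K (Suc r))) \<le> r"
    by (meson degree_smult_le order.trans)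
  moreover have "degree (pCons 0 (HH K r)) \<le> r"
  proof (cases r)
    case 0 then show ?thesis by simp
  next
    case (Suc r')
    have "degree (HH K r) \<le> r'" using HH_deg[of K r] Suc by simp
    then show ?thesis using degree_pCons_le[of 0 "HH K r"] Suc by simp
  qed
  ultimately show ?thesis by (meson degree_add_le)
qed

lemma EE_nz1:
  assumes "p \<le> i" "coeff (EE K \<xi> p i) l \<noteq> 0" shows "p \<le> l \<and> l \<le> i"
proof -
  obtain d where i: "i = p + d" using assms(1) le_Suc_ex by blast
  have c: "coeff (EE K \<xi> p i) l = (if l < p then 0 else coeff (HH K (Suc d) - smult \<xi> (HH K d)) (l - p))"
    unfolding EE_def using assms(1) i by (simp add: coeff_monom_mult del: HH.simps)
  then have "p \<le> l" using assms(2) by (auto split: if_splits)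
  moreover have "l - p \<le> d"
  proof -
    have "coeff (HH K (Suc d) - smult \<xi> (HH K d)) (l - p) \<noteq> 0" using assms(2) c by (auto split: if_splits)
    then have "l - p \<le> degree (HH K (Suc d) - smult \<xi> (HH K d))" by (rule le_degree)
    then show ?thesis using deg_HH_diff[of K d \<xi>] by linarith
  qed
  ultimately show ?thesis using i by simp
qed

lemma EE_nz2:
  assumes "\<not> p \<le> i" "coeff (EE K \<xi> p i) l \<noteq> 0" shows "i \<le> l \<and> l \<le> p - 1"
proof -
  obtain r where p: "p = i + Suc r" using assms(1) by (intro that[of "p - i - 1"]) simp
  have c: "coeff (EE K \<xi> p i) l = (if l < i then 0 else coeff (smult \<xi> (HH K (Suc r)) - pCons 0 (HH K r)) (l - i))"
    unfolding EE_def using assms(1) p by (simp add: coeff_monom_mult del: HH.simps)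
  then have "i \<le> l" using assms(2) by (auto split: if_splits)
  moreover have "l - i \<le> r"
  proof -
    have "coeff (smult \<xi> (HH K (Suc r)) - pCons 0 (HH K r)) (l - i) \<noteq> 0" using assms(2) c by (auto split: if_splits)
    then have "l - i \<le> degree (smult \<xi> (HH K (Suc r)) - pCons 0 (HH K r))" by (rule le_degree)
    then show ?thesis using deg_HH_diff2[of \<xi> K r] by linarith
  qed
  ultimately show ?thesis using p by simp
qed

lemma EE_diag1: assumes "p \<le> i" shows "coeff (EE K \<xi> p i) i = 1"
proof -
  obtain d where i: "i = p + d" using assms(1) le_Suc_ex by blast
  have "coeff (EE K \<xi> p i) i = coeff (HH K (Suc d)) d - \<xi> * coeff (HH K d) d"
    unfolding EE_def using assms(1) i by (simp add: coeff_monom_mult del: HH.simps)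
  moreover have "coeff (HH K d) d = 0"
  proof (cases d)
    case 0 then show ?thesis by simp
  next
    case (Suc d') then show ?thesis using HH_deg[of K d] by (simp add: coeff_eq_0 del: HH.simps)
  qed
  ultimately show ?thesis using HH_deg[of K d] by simp
qed

lemma EE_diag2: assumes "\<not> p \<le> i" shows "coeff (EE K \<xi> p i) i = \<xi> * (-K) ^ (p - i - 1)"
proof -
  obtain r where p: "p = i + Suc r" using assms(1) by (intro that[of "p - i - 1"]) simp
  have "coeff (EE K \<xi> p i) i = \<xi> * coeff (HH K (Suc r)) 0"
    unfolding EE_def using assms(1) p by (simp add: coeff_monom_mult del: HH.simps)
  then show ?thesis using p by (simp add: HH_coeff0 del: HH.simps)
qed

lemma EF_nz:
  assumes "i < n" "coeff (EF K n i) l \<noteq> 0" shows "i \<le> l \<and> l \<le> n - 1"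
proof -
  obtain r where n: "n = i + Suc r" using assms(1) by (intro that[of "n - i - 1"]) simp
  have c: "coeff (EF K n i) l = - (if l < i then 0 else coeff (smult K (HH K (Suc r)) + pCons 0 (HH K r)) (l - i))"
    unfolding EF_def using n by (simp add: coeff_monom_mult del: HH.simps)
  then have "i \<le> l" using assms(2) by (auto split: if_splits)
  moreover have "l - i \<le> r"
  proof -
    have "coeff (smult K (HH K (Suc r)) + pCons 0 (HH K r)) (l - i) \<noteq> 0" using assms(2) c by (auto split: if_splits)
    then have "l - i \<le> degree (smult K (HH K (Suc r)) + pCons 0 (HH K r))" by (rule le_degree)
    then show ?thesis using deg_HH_sum3[of K r] by linarith
  qed
  ultimately show ?thesis using n by simp
qed

lemma EF_diag: assumes "i < n" shows "coeff (EF K n i) i = (-K) ^ (n - i)"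
proof -
  obtain r where n: "n = i + Suc r" using assms(1) by (intro that[of "n - i - 1"]) simp
  have "coeff (EF K n i) i = - (K * coeff (HH K (Suc r)) 0)"
    unfolding EF_def using n by (simp add: coeff_monom_mult del: HH.simps)
  then show ?thesis using n by (simp add: HH_coeff0 del: HH.simps)
qed

lemma det_rho:
  fixes C :: "nat \<Rightarrow> nat \<Rightarrow> 'a::comm_ring_1" and \<rho> :: "nat \<Rightarrow> nat"
  assumes inj: "inj_on \<rho> {..<n}" and nz: "\<And>l i. l < n \<Longrightarrow> i < n \<Longrightarrow> C l i \<noteq> 0 \<Longrightarrow> \<rho> l \<le> \<rho> i"
  shows "det (mat n n (\<lambda>(l,i). C l i)) = (\<Prod>l<n. C l l)"
proof -
  have m: "mat n n (\<lambda>(l,i). C l i) \<in> carrier_mat n n" by simp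
  let ?U = "{0..<n}"
  let ?PU = "{p. p permutes ?U}"
  let ?pp = "\<lambda>p. signof p * (\<Prod>i = 0..<n. mat n n (\<lambda>(l,i). C l i) $$ (i, p i))"
  have fPU: "finite ?PU" by (rule finite_permutations, simp)
  have p0: "?pp p = 0" if p: "p \<in> ?PU - {id}" for p
  proof -
    from p have pU: "p permutes ?U" and pid: "p \<noteq> id" by auto
    have pin: "p i < n" if "i < n" for i using permutes_in_image[OF pU] that by auto
    have "\<exists>i\<in>?U. C i (p i) = 0"
    proof (rule ccontr)
      assume "\<not> ?thesis"
      then have le: "\<rho> i \<le> \<rho> (p i)" if "i < n" for i using nz[OF that pin[OF that]] that by auto
      have eq: "\<rho> (p i) = \<rho> i" if i: "i < n" for i
      proof (rule ccontr)
        assume "\<rho> (p i) \<noteq> \<rho> i"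
        then have "\<rho> i < \<rho> (p i)" using le[OF i] by simp
        then have "sum \<rho> ?U < sum (\<rho> \<circ> p) ?U"
          by (intro sum_strict_mono_ex1) (use le i in auto)
        moreover have "sum (\<rho> \<circ> p) ?U = sum \<rho> ?U" using sum.permute[OF pU, of \<rho>] by simp
        ultimately show False by simp
      qed
      have "p i = i" for i
      proof (cases "i < n")
        case True
        then show ?thesis using inj eq[OF True] pin[OF True] unfolding inj_on_def by auto
      next
        case False
        then show ?thesis using permutes_not_in[OF pU] by auto
      qed
      then have "p = id" by auto
      with pid show False by simp
    qed
    then have "(\<Prod>i = 0..<n. mat n n (\<lambda>(l,i). C l i) $$ (i, p i)) = 0"
      using pin by (intro prod_zero) auto
    then show ?thesis by simp
  qed
  have "det (mat n n (\<lambda>(l,i). C l i)) = (\<Sum>p\<in>?PU. ?pp p)" unfolding det_def'[OF m] ..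
  also have "\<dots> = ?pp id + (\<Sum>p\<in>?PU - {id}. ?pp p)"
    by (rule sum.remove, insert fPU, auto simp: permutes_id)
  also have "(\<Sum>p\<in>?PU - {id}. ?pp p) = 0" by (rule sum.neutral, rule ballI, rule p0)
  finally show ?thesis by (simp add: atLeast0LessThan)
qed

lemma poly_sum_n:
  fixes p :: "'a::comm_ring_1 poly"
  assumes "degree p < n"
  shows "poly p x = (\<Sum>l<n. coeff p l * x ^ l)"
proof -
  have "poly p x = (\<Sum>l\<le>degree p. coeff p l * x ^ l)" by (rule poly_altdef)
  also have "\<dots> = (\<Sum>l<n. coeff p l * x ^ l)"
    by (rule sum.mono_neutral_left) (use assms in \<open>auto simp: coeff_eq_0\<close>)
  finally show ?thesis .
qed

lemma det_poly:
  fixes P :: "nat \<Rightarrow> 'a::{comm_ring_1} poly"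
  assumes deg: "\<And>i. i < n \<Longrightarrow> degree (P i) < n"
  shows "det (mat n n (\<lambda>(k,i). poly (P i) (x k))) = det (mat n n (\<lambda>(k,i). x k ^ i)) * det (mat n n (\<lambda>(l,i). coeff (P i) l))"
proof -
  have W: "mat n n (\<lambda>(k,i). x k ^ i) \<in> carrier_mat n n" and C: "mat n n (\<lambda>(l,i). coeff (P i) l) \<in> carrier_mat n n" by auto
  have "mat n n (\<lambda>(k,i). poly (P i) (x k)) = mat n n (\<lambda>(k,i). x k ^ i) * mat n n (\<lambda>(l,i). coeff (P i) l)"
  proof (rule eq_matI)
    fix k i assume k: "k < dim_row (mat n n (\<lambda>(k,i). x k ^ i) * mat n n (\<lambda>(l,i). coeff (P i) l))"
      and i: "i < dim_col (mat n n (\<lambda>(k,i). x k ^ i) * mat n n (\<lambda>(l,i). coeff (P i) l))"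
    then have k': "k < n" and i': "i < n" by auto
    have "(mat n n (\<lambda>(k,i). x k ^ i) * mat n n (\<lambda>(l,i). coeff (P i) l)) $$ (k,i) = (\<Sum>l<n. x k ^ l * coeff (P i) l)"
      using k' i' by (auto simp: scalar_prod_def atLeast0LessThan intro!: sum.cong)
    also have "\<dots> = poly (P i) (x k)" using poly_sum_n[OF deg[OF i'], of "x k"] by (simp add: mult.commute)
    finally show "mat n n (\<lambda>(k,i). poly (P i) (x k)) $$ (k,i) = (mat n n (\<lambda>(k,i). x k ^ i) * mat n n (\<lambda>(l,i). coeff (P i) l)) $$ (k,i)"
      using k' i' by simp
  qed auto
  then show ?thesis using det_mult[OF W C] by simp
qed


lemma VV_conv: "VV n x = (\<Prod>k<n. \<Prod>j<k. x (Suc k) - x (Suc j))"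
proof -
  have "VV n x = (\<Prod>k<n. \<Prod>j\<in>{Suc 0..<Suc k}. x (Suc k) - x j)"
    unfolding VV_def using prod.atLeast1_atMost_eq[of "\<lambda>k. \<Prod>j\<in>{1..<k}. x k - x j" n] by simp
  also have "\<dots> = (\<Prod>k<n. \<Prod>j<k. x (Suc k) - x (Suc j))"
    by (rule prod.cong[OF refl], subst prod.atLeast_Suc_lessThan_Suc_shift, simp add: atLeast0LessThan comp_def)
  finally show ?thesis .
qed

lemma VV_det: "VV n x = det (mat n n (\<lambda>(k,i). x (Suc k) ^ i))"
  using vandermonde[of n "\<lambda>k. x (Suc k)"] VV_conv[of n x] by simp

lemma VV_nz:
  assumes "\<forall>j\<in>{1..n}. \<forall>k\<in>{1..n}. j \<noteq> k \<longrightarrow> b j \<noteq> b k"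
  shows "VV n b \<noteq> 0"
  unfolding VV_def using assms by (auto simp: prod_zero_iff)

lemma key:
  fixes a b \<alpha> \<beta> :: "nat \<Rightarrow> complex" and P :: "nat \<Rightarrow> complex poly"
  assumes a0: "\<forall>k\<in>{1..n}. a k \<noteq> 0"
    and nz: "\<forall>j\<in>{1..n}. \<forall>k\<in>{1..n}. j \<noteq> k \<longrightarrow> a j \<noteq> b k \<and> b j \<noteq> b k"
    and w: "\<forall>k\<in>{1..n}. sfun a b k \<xi> * ee \<phi> m k * (b k / a k)^(n-1) = \<alpha> k / \<beta> k"
    and b0: "\<forall>k\<in>{1..n}. \<beta> k \<noteq> 0"
    and ent: "\<forall>k\<in>{1..n}. \<forall>i<n. \<beta> k * b k ^ i - \<alpha> k * a k ^ i = (b k - a k) * poly (P i) (a k * b k)"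
    and deg: "\<forall>i<n. degree (P i) < n"
  shows "Theta a b \<phi> n m (ampl a b n \<xi>) * (\<Prod>k\<in>{1..n}. \<beta> k) * VV n b
       = (\<Prod>k\<in>{1..n}. b k - a k) * VV n (\<lambda>k. a k * b k) * det (mat n n (\<lambda>(l,i). coeff (P i) l))"
proof -
  let ?N = "{1..n}"
  have Vb: "VV n b \<noteq> 0" by (rule VV_nz) (use nz in blast)
  have tS: "(-1)^card S * (\<Prod>k\<in>S. ampl a b n \<xi> k * ee \<phi> m k) * (\<Prod>k\<in>S. \<Prod>j\<in>S\<inter>{..<k}. dsh a b j k)
      * (\<Prod>k\<in>?N. \<beta> k) * VV n b
      = (-1)^card S * (\<Prod>k\<in>S. \<alpha> k) * (\<Prod>k\<in>?N-S. \<beta> k) * VV n (cS a b S)"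
    if S: "S \<in> Pow ?N" for S
  proof -
    have S': "S \<subseteq> ?N" using S by simp
    have 1: "(\<Prod>k\<in>S. ampl a b n \<xi> k * ee \<phi> m k) = (\<Prod>k\<in>S. sfun a b k \<xi> * ee \<phi> m k) * (\<Prod>k\<in>S. \<Prod>j\<in>?N-{k}. sfun a b k (b j))"
      unfolding ampl_def by (simp add: prod.distrib ac_simps)
    have 2: "(\<Prod>k\<in>S. sfun a b k \<xi> * ee \<phi> m k) * (\<Prod>k\<in>S. (b k / a k)^(n-1)) = (\<Prod>k\<in>S. \<alpha> k / \<beta> k)"
      unfolding prod.distrib[symmetric] using w S' by (intro prod.cong) auto
    have 3: "(\<Prod>k\<in>S. \<alpha> k / \<beta> k) * (\<Prod>k\<in>?N. \<beta> k) = (\<Prod>k\<in>S. \<alpha> k) * (\<Prod>k\<in>?N-S. \<beta> k)"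
    proof -
      have "(\<Prod>k\<in>?N. \<beta> k) = (\<Prod>k\<in>?N-S. \<beta> k) * (\<Prod>k\<in>S. \<beta> k)"
        by (rule prod.subset_diff[OF S'], simp)
      moreover have "(\<Prod>k\<in>S. \<alpha> k / \<beta> k) * (\<Prod>k\<in>S. \<beta> k) = (\<Prod>k\<in>S. \<alpha> k)"
        unfolding prod.distrib[symmetric] using b0 S' by (intro prod.cong) auto
      ultimately show ?thesis by (simp add: ac_simps)
    qed
    have "(-1)^card S * (\<Prod>k\<in>S. ampl a b n \<xi> k * ee \<phi> m k) * (\<Prod>k\<in>S. \<Prod>j\<in>S\<inter>{..<k}. dsh a b j k)
      * (\<Prod>k\<in>?N. \<beta> k) * VV n b
      = (-1)^card S * (\<Prod>k\<in>S. sfun a b k \<xi> * ee \<phi> m k) * ((\<Prod>k\<in>S. \<Prod>j\<in>?N-{k}. sfun a b k (b j)) * (\<Prod>k\<in>S. \<Prod>j\<in>S\<inter>{..<k}. dsh a b j k))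
      * (\<Prod>k\<in>?N. \<beta> k) * VV n b"
      unfolding 1 by (simp add: ac_simps)
    also have "\<dots> = (-1)^card S * ((\<Prod>k\<in>S. sfun a b k \<xi> * ee \<phi> m k) * (\<Prod>k\<in>S. (b k / a k)^(n-1))) * (VV n (cS a b S) / VV n b)
      * (\<Prod>k\<in>?N. \<beta> k) * VV n b"
      unfolding pair_prod[OF S' a0 nz] by (simp add: ac_simps)
    also have "\<dots> = (-1)^card S * ((\<Prod>k\<in>S. \<alpha> k / \<beta> k) * (\<Prod>k\<in>?N. \<beta> k)) * VV n (cS a b S)"
      unfolding 2 using Vb by (simp add: ac_simps)
    also have "\<dots> = (-1)^card S * (\<Prod>k\<in>S. \<alpha> k) * (\<Prod>k\<in>?N-S. \<beta> k) * VV n (cS a b S)"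
      unfolding 3 by (simp add: ac_simps)
    finally show ?thesis .
  qed
  have "Theta a b \<phi> n m (ampl a b n \<xi>) * (\<Prod>k\<in>?N. \<beta> k) * VV n b
     = (\<Sum>S\<in>Pow ?N. (-1)^card S * (\<Prod>k\<in>S. ampl a b n \<xi> k * ee \<phi> m k) * (\<Prod>k\<in>S. \<Prod>j\<in>S\<inter>{..<k}. dsh a b j k)
      * (\<Prod>k\<in>?N. \<beta> k) * VV n b)"
    unfolding theta_expand by (simp add: sum_distrib_right)
  also have "\<dots> = (\<Sum>S\<in>Pow ?N. (-1)^card S * (\<Prod>k\<in>S. \<alpha> k) * (\<Prod>k\<in>?N-S. \<beta> k) * det (mat n n (\<lambda>(k,i). cS a b S (Suc k) ^ i)))"
    by (rule sum.cong[OF refl], subst tS, simp_all add: VV_det)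
  also have "\<dots> = det (mat n n (\<lambda>(k,i). \<beta> (Suc k) * b (Suc k) ^ i - \<alpha> (Suc k) * a (Suc k) ^ i))"
    by (rule det_expand[symmetric])
  also have "mat n n (\<lambda>(k,i). \<beta> (Suc k) * b (Suc k) ^ i - \<alpha> (Suc k) * a (Suc k) ^ i)
     = mat n n (\<lambda>(k,i). (b (Suc k) - a (Suc k)) * poly (P i) (a (Suc k) * b (Suc k)))"
    by (rule eq_matI, auto simp: ent)
  also have "det \<dots> = (\<Prod>k<n. b (Suc k) - a (Suc k)) * det (mat n n (\<lambda>(k,i). poly (P i) (a (Suc k) * b (Suc k))))"
    by (rule det_rows_scale)
  also have "det (mat n n (\<lambda>(k,i). poly (P i) (a (Suc k) * b (Suc k)))) = VV n (\<lambda>k. a k * b k) * det (mat n n (\<lambda>(l,i). coeff (P i) l))"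
    unfolding VV_det by (rule det_poly, use deg in auto)
  also have "(\<Prod>k<n. b (Suc k) - a (Suc k)) = (\<Prod>k\<in>?N. b k - a k)"
    using prod.atLeast1_atMost_eq[of "\<lambda>k. b k - a k" n] by simp
  finally show ?thesis by (simp add: ac_simps)
qed


lemma gauss1: "2 * (\<Sum>l<p. l) + p = p * (p::nat)"
  by (induction p) (auto simp: algebra_simps)
lemma gauss2: "2 * (\<Sum>l<p. l) = p * (p - 1::nat)"
  using gauss1[of p] by (simp add: algebra_simps diff_mult_distrib2)
lemma gauss3: "2 * (\<Sum>l<p. Suc l) = p * (Suc p)"
  by (induction p) (auto simp: algebra_simps)
lemma sum_A: "(\<Sum> l<p. p - 1 - l) = p*(p-1) div (2::nat)"
proof -
  have "(\<Sum> l<p. p - 1 - l) = (\<Sum> l<p. p - Suc l)" by simp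
  also have "\<dots> = (\<Sum>l<p. l)" using sum.nat_diff_reindex[of "\<lambda>l. l" p] by simp
  finally show ?thesis using gauss2[of p] by simp
qed
lemma sum_B: "(\<Sum> l<n. n - l) = (n+1)*n div (2::nat)"
proof -
  have "(\<Sum> l<n. n - l) = (\<Sum> l<n. Suc (n - Suc l))" by (rule sum.cong, auto)
  also have "\<dots> = (\<Sum>l<n. Suc l)" using sum.nat_diff_reindex[of Suc n] by simp
  finally show ?thesis using gauss3[of n] by simp
qed

lemma deg_EE: assumes "p \<le> n" "i < n" shows "degree (EE K \<xi> p i) < n"
proof -
  have "degree (EE K \<xi> p i) \<le> n - 1"
  proof (rule degree_le, intro allI impI)
    fix l assume l: "n - 1 < l"
    show "coeff (EE K \<xi> p i) l = 0"
    proof (rule ccontr)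
      assume c: "coeff (EE K \<xi> p i) l \<noteq> 0"
      show False
      proof (cases "p \<le> i")
        case True then show False using EE_nz1[OF True c] assms l by linarith
      next
        case False then show False using EE_nz2[OF False c] assms l by linarith
      qed
    qed
  qed
  then show ?thesis using assms by linarith
qed

lemma deg_EF: assumes "i < n" shows "degree (EF K n i) < n"
proof -
  have "degree (EF K n i) \<le> n - 1"
  proof (rule degree_le, intro allI impI)
    fix l assume l: "n - 1 < l"
    show "coeff (EF K n i) l = 0"
    proof (rule ccontr)
      assume c: "coeff (EF K n i) l \<noteq> 0"
      show False using EF_nz[OF assms c] l by linarith
    qed
  qed
  then show ?thesis using assms by linarith
qed

lemma detC_EE:
  assumes pn: "p \<le> n"
  shows "det (mat n n (\<lambda>(l,i). coeff (EE K \<xi> p i) l)) = \<xi> ^ p * (-K) ^ (p * (p - 1) div 2)"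
proof -
  define \<rho> where "\<rho> t = (if t < p then p - 1 - t else t)" for t
  have inj: "inj_on \<rho> {..<n}"
    by (rule inj_onI) (auto simp: \<rho>_def split: if_splits)
  have "det (mat n n (\<lambda>(l,i). coeff (EE K \<xi> p i) l)) = (\<Prod>l<n. coeff (EE K \<xi> p l) l)"
  proof (rule det_rho[OF inj])
    fix l i assume l: "l < n" and i: "i < n" and c: "coeff (EE K \<xi> p i) l \<noteq> 0"
    show "\<rho> l \<le> \<rho> i"
    proof (cases "p \<le> i")
      case True then show ?thesis using EE_nz1[OF True c] by (auto simp: \<rho>_def)
    next
      case False then show ?thesis using EE_nz2[OF False c] by (auto simp: \<rho>_def)
    qed
  qed
  also have "\<dots> = (\<Prod>l<n. if l \<in> {..<p} then \<xi> * (-K) ^ (p - l - 1) else 1)"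
    by (rule prod.cong[OF refl]) (auto simp: EE_diag1 EE_diag2)
  also have "\<dots> = (\<Prod>l<p. \<xi> * (-K) ^ (p - 1 - l))"
    by (subst prod_restrict_S) (use pn in auto)
  also have "\<dots> = \<xi> ^ p * (-K) ^ (\<Sum>l<p. p - 1 - l)"
    by (simp add: prod.distrib power_sum)
  also have "(\<Sum>l<p. p - 1 - l) = p * (p - 1) div 2" by (rule sum_A)
  finally show ?thesis .
qed

lemma detC_EF:
  shows "det (mat n n (\<lambda>(l,i). coeff (EF K n i) l)) = (-K) ^ ((n + 1) * n div 2)"
proof -
  define \<rho> where "\<rho> t = n - 1 - t" for t
  have inj: "inj_on \<rho> {..<n}"
    by (rule inj_onI) (auto simp: \<rho>_def)
  have "det (mat n n (\<lambda>(l,i). coeff (EF K n i) l)) = (\<Prod>l<n. coeff (EF K n l) l)"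
  proof (rule det_rho[OF inj])
    fix l i assume l: "l < n" and i: "i < n" and c: "coeff (EF K n i) l \<noteq> 0"
    show "\<rho> l \<le> \<rho> i" using EF_nz[OF i c] by (auto simp: \<rho>_def)
  qed
  also have "\<dots> = (\<Prod>l<n. (-K) ^ (n - l))"
    by (rule prod.cong[OF refl]) (auto simp: EF_diag)
  also have "\<dots> = (-K) ^ (\<Sum>l<n. n - l)"
    by (simp add: power_sum)
  also have "(\<Sum>l<n. n - l) = (n + 1) * n div 2" by (rule sum_B)
  finally show ?thesis .
qed

lemma exp_pm: "exp (\<i> * complex_of_real x) + exp (- \<i> * complex_of_real x) = 2 * complex_of_real (cos x)"
proof -
  have "exp (\<i> * complex_of_real x) = cis x" by (simp add: cis_conv_exp)
  moreover have "exp (- \<i> * complex_of_real x) = cis (- x)" by (simp add: cis_conv_exp)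
  ultimately show ?thesis by (simp add: complex_eq_iff cis.sel)
qed


theorem mainTheorem2:
  fixes M n :: nat and p :: "nat \<Rightarrow> nat" and K \<xi> :: complex and r :: "nat \<Rightarrow> complex"
    and \<phi> :: "nat \<Rightarrow> real" and D Ds \<Lambda> f :: "nat \<Rightarrow> complex"
  assumes M: "M \<ge> 2"
    and n: "1 \<le> n" "n \<le> M - 1"
    and p_range: "\<forall>k\<in>{1..n}. p k \<in> {1..M-1}"
    and p_inj: "inj_on p {1..n}"
    and phi_def: "\<phi> = (\<lambda>k. real (p k) * pi / real M)"
    and r_sq: "\<forall>k\<in>{1..n}. (r k)^2 = (of_real (cos (\<phi> k)))^2 + K"
    and D_def: "D = (\<lambda>k. Dlt (\<phi> k) (r k))"
    and Ds_def: "Ds = (\<lambda>k. Dlts (\<phi> k) (r k))"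
    and L_def: "\<Lambda> = (\<lambda>k. D k * Ds k)"
    and f_def: "f = ampl D Ds n \<xi>"
    and nz1: "\<forall>k\<in>{1..n}. D k \<noteq> 0 \<and> Ds k \<noteq> 0 \<and> Ds k \<noteq> \<xi>"
    and nz2: "\<forall>j\<in>{1..n}. \<forall>k\<in>{1..n}. j \<noteq> k \<longrightarrow> D j \<noteq> Ds k \<and> Ds j \<noteq> Ds k"
  shows "Theta D Ds \<phi> n (int n) f =
           (\<Prod>k=1..n. (Ds k - D k) / (Ds k - \<xi>))
           * (\<Prod>j=1..n. \<Prod>k\<in>{j<..n}. (\<Lambda> j - \<Lambda> k) / (Ds j - Ds k))
         \<and> (\<forall>m\<le>n. Theta D Ds \<phi> n (int m) f =
           (- K) ^ ((n - m) * (n - m - 1) div 2) * (\<xi> / (\<Prod>k=1..n. D k)) ^ (n - m)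
           * Theta D Ds \<phi> n (int n) f)
         \<and> (\<xi> = 1 \<longrightarrow> Theta D Ds \<phi> n (-1) f =
           (- K) ^ ((n + 1) * n div 2) * (\<xi> / (\<Prod>k=1..n. D k)) ^ (n + 1)
           * Theta D Ds \<phi> n (int n) f)"
proof -
  let ?N = "{1..n}"
  have nzD: "D k \<noteq> 0" "Ds k \<noteq> 0" "Ds k \<noteq> \<xi>" if "k \<in> ?N" for k using nz1 that by auto
  have Dk: "D k = exp (\<i> * of_real (\<phi> k)) * (r k + of_real (cos (\<phi> k)))" for k
    by (simp add: D_def Dlt_def)
  have Dsk: "Ds k = exp (- \<i> * of_real (\<phi> k)) * (r k + of_real (cos (\<phi> k)))" for k
    by (simp add: Ds_def Dlts_def)
  have EE1: "exp (\<i> * of_real (\<phi> k)) * exp (- \<i> * of_real (\<phi> k)) = 1" for k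
    by (simp add: exp_add[symmetric])
  have rel: "D k * Ds k = D k + Ds k + K" if k: "k \<in> ?N" for k
  proof -
    let ?E = "exp (\<i> * of_real (\<phi> k))" and ?E' = "exp (- \<i> * of_real (\<phi> k))"
    let ?c = "of_real (cos (\<phi> k)) :: complex"
    have r2: "(r k)^2 = ?c^2 + K" using r_sq k by auto
    have "D k * Ds k = (?E * ?E') * (r k + ?c)^2" unfolding Dk Dsk by (simp add: power2_eq_square ac_simps)
    also have "\<dots> = (r k + ?c)^2" using EE1[of k] by simp
    also have "\<dots> = (?E + ?E') * (r k + ?c) + K"
      unfolding exp_pm using r2 by (simp add: power2_eq_square algebra_simps)
    also have "\<dots> = D k + Ds k + K" unfolding Dk Dsk by (simp add: algebra_simps)
    finally show ?thesis .
  qed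
  have ratio: "exp (2 * \<i> * of_real (\<phi> k)) = D k / Ds k" if k: "k \<in> ?N" for k
  proof -
    let ?E = "exp (\<i> * of_real (\<phi> k))" and ?E' = "exp (- \<i> * of_real (\<phi> k))"
    have rc: "r k + of_real (cos (\<phi> k)) \<noteq> 0" using nzD(1)[OF k] Dk[of k] by auto
    have "D k / Ds k = ?E / ?E'" unfolding Dk Dsk using rc by simp
    also have "\<dots> = ?E * ?E" by (simp add: exp_minus divide_inverse)
    also have "\<dots> = exp (2 * \<i> * of_real (\<phi> k))" by (simp add: exp_add[symmetric] algebra_simps)
    finally show ?thesis by simp
  qed
  have ee_nat: "ee \<phi> (int j) k = (D k / Ds k) ^ j" if k: "k \<in> ?N" for k j
  proof -
    have "ee \<phi> (int j) k = exp (of_nat j * (2 * \<i> * of_real (\<phi> k)))" unfolding ee_def by (simp add: ac_simps)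
    also have "\<dots> = (D k / Ds k) ^ j" unfolding exp_of_nat_mult ratio[OF k] ..
    finally show ?thesis .
  qed
  have ee_m1: "ee \<phi> (-1) k = Ds k / D k" if k: "k \<in> ?N" for k
  proof -
    have "ee \<phi> (-1) k = exp (- (2 * \<i> * of_real (\<phi> k)))" unfolding ee_def by simp
    also have "\<dots> = Ds k / D k" unfolding exp_minus ratio[OF k] by simp
    finally show ?thesis .
  qed
  have a0: "\<forall>k\<in>?N. D k \<noteq> 0" using nzD by auto
  have nz: "\<forall>j\<in>?N. \<forall>k\<in>?N. j \<noteq> k \<longrightarrow> D j \<noteq> Ds k \<and> Ds j \<noteq> Ds k" using nz2 by auto
  have G: "Theta D Ds \<phi> n (int (n - p)) f * (\<Prod>k\<in>?N. D k ^ p * (Ds k - \<xi>)) * VV n Ds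
      = (\<Prod>k\<in>?N. Ds k - D k) * VV n \<Lambda> * (\<xi> ^ p * (-K) ^ (p * (p - 1) div 2))" if pn: "p \<le> n" for p
  proof -
    have w: "\<forall>k\<in>?N. sfun D Ds k \<xi> * ee \<phi> (int (n - p)) k * (Ds k / D k)^(n-1) = (Ds k ^ p * (D k - \<xi>)) / (D k ^ p * (Ds k - \<xi>))"
    proof
      fix k assume k: "k \<in> ?N"
      let ?x = "Ds k / D k"
      have x0: "?x \<noteq> 0" using nzD[OF k] by simp
      have E: "ee \<phi> (int (n - p)) k = (inverse ?x) ^ (n - p)" unfolding ee_nat[OF k] by (simp add: inverse_eq_divide)
      have X: "?x * (inverse ?x) ^ (n - p) * ?x ^ (n - 1) = ?x ^ p"
      proof -
        have "?x * ?x ^ (n - 1) = ?x ^ n" using n(1) by (simp add: power_Suc[symmetric])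
        also have "\<dots> = ?x ^ p * ?x ^ (n - p)" using pn by (simp add: power_add[symmetric])
        finally show ?thesis using x0 by (simp add: power_inverse field_simps)
      qed
      have "sfun D Ds k \<xi> * ee \<phi> (int (n - p)) k * (Ds k / D k)^(n-1) = (?x * (inverse ?x) ^ (n - p) * ?x ^ (n - 1)) * ((D k - \<xi>) / (Ds k - \<xi>))"
        unfolding sfun_def E by (simp only: ac_simps)
      also have "\<dots> = ?x ^ p * ((D k - \<xi>) / (Ds k - \<xi>))" unfolding X ..
      also have "\<dots> = (Ds k ^ p * (D k - \<xi>)) / (D k ^ p * (Ds k - \<xi>))" by (simp add: power_divide)
      finally show "sfun D Ds k \<xi> * ee \<phi> (int (n - p)) k * (Ds k / D k)^(n-1) = (Ds k ^ p * (D k - \<xi>)) / (D k ^ p * (Ds k - \<xi>))" .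
    qed
    have b0: "\<forall>k\<in>?N. D k ^ p * (Ds k - \<xi>) \<noteq> 0" using nzD by auto
    have ent: "\<forall>k\<in>?N. \<forall>i<n. D k ^ p * (Ds k - \<xi>) * Ds k ^ i - Ds k ^ p * (D k - \<xi>) * D k ^ i = (Ds k - D k) * poly (EE K \<xi> p i) (D k * Ds k)"
    proof (intro ballI allI impI)
      fix k i assume k: "k \<in> ?N" and i: "i < n"
      show "D k ^ p * (Ds k - \<xi>) * Ds k ^ i - Ds k ^ p * (D k - \<xi>) * D k ^ i = (Ds k - D k) * poly (EE K \<xi> p i) (D k * Ds k)"
        using EE_eval[OF rel[OF k], of p i \<xi>] by (simp add: ac_simps)
    qed
    have deg: "\<forall>i<n. degree (EE K \<xi> p i) < n" using deg_EE[OF pn] by auto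
    have "Theta D Ds \<phi> n (int (n - p)) (ampl D Ds n \<xi>) * (\<Prod>k\<in>?N. D k ^ p * (Ds k - \<xi>)) * VV n Ds
       = (\<Prod>k\<in>?N. Ds k - D k) * VV n (\<lambda>k. D k * Ds k) * det (mat n n (\<lambda>(l,i). coeff (EE K \<xi> p i) l))"
      by (rule key[OF a0 nz w b0 ent deg])
    then show ?thesis unfolding detC_EE[OF pn] f_def L_def .
  qed
  define Q where "Q = (\<Prod>k\<in>?N. Ds k - \<xi>) * VV n Ds"
  define R where "R = (\<Prod>k\<in>?N. Ds k - D k) * VV n \<Lambda>"
  define PD where "PD = (\<Prod>k\<in>?N. D k)"
  have Q0: "Q \<noteq> 0" unfolding Q_def using nzD VV_nz[of n Ds] nz by auto
  have PD0: "PD \<noteq> 0" unfolding PD_def using nzD by auto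
  have prodp: "(\<Prod>k\<in>?N. D k ^ p * (Ds k - \<xi>)) = PD ^ p * (\<Prod>k\<in>?N. Ds k - \<xi>)" for p
    unfolding PD_def by (simp add: prod.distrib prod_power_distrib)
  have Gn: "Theta D Ds \<phi> n (int n) f * Q = R"
    using G[of 0] unfolding Q_def R_def by (simp add: ac_simps)
  have part1: "Theta D Ds \<phi> n (int n) f =
           (\<Prod>k=1..n. (Ds k - D k) / (Ds k - \<xi>))
           * (\<Prod>j=1..n. \<Prod>k\<in>{j<..n}. (\<Lambda> j - \<Lambda> k) / (Ds j - Ds k))"
  proof -
    have "Theta D Ds \<phi> n (int n) f = R / Q" using Gn Q0 by (simp add: field_simps)
    also have "\<dots> = ((\<Prod>k\<in>?N. Ds k - D k) / (\<Prod>k\<in>?N. Ds k - \<xi>)) * (VV n \<Lambda> / VV n Ds)"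
      unfolding R_def Q_def by simp
    also have "(\<Prod>k\<in>?N. Ds k - D k) / (\<Prod>k\<in>?N. Ds k - \<xi>) = (\<Prod>k=1..n. (Ds k - D k) / (Ds k - \<xi>))"
      by (simp add: prod_dividef)
    also have "VV n \<Lambda> / VV n Ds = (\<Prod>k\<in>?N. \<Prod>j\<in>{1..<k}. (\<Lambda> j - \<Lambda> k) / (Ds j - Ds k))"
    proof -
      have "VV n \<Lambda> / VV n Ds = (\<Prod>k\<in>?N. \<Prod>j\<in>{1..<k}. (\<Lambda> k - \<Lambda> j) / (Ds k - Ds j))"
        unfolding VV_def by (simp add: prod_dividef)
      also have "\<dots> = (\<Prod>k\<in>?N. \<Prod>j\<in>{1..<k}. (\<Lambda> j - \<Lambda> k) / (Ds j - Ds k))"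
        by (rule prod.cong[OF refl], rule prod.cong[OF refl], metis minus_diff_eq minus_divide_divide)
      finally show ?thesis .
    qed
    also have "(\<Prod>k\<in>?N. \<Prod>j\<in>{1..<k}. (\<Lambda> j - \<Lambda> k) / (Ds j - Ds k)) = (\<Prod>j=1..n. \<Prod>k\<in>{j<..n}. (\<Lambda> j - \<Lambda> k) / (Ds j - Ds k))"
      by (rule swap_pairs[symmetric])
    finally show ?thesis .
  qed
  have part2: "\<forall>m\<le>n. Theta D Ds \<phi> n (int m) f =
           (- K) ^ ((n - m) * (n - m - 1) div 2) * (\<xi> / (\<Prod>k=1..n. D k)) ^ (n - m)
           * Theta D Ds \<phi> n (int n) f"
  proof (intro allI impI)
    fix m assume m: "m \<le> n"
    define p where "p = n - m"
    define T where "T = Theta D Ds \<phi> n (int m) f"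
    define T0 where "T0 = Theta D Ds \<phi> n (int n) f"
    define c where "c = \<xi> ^ p * (-K) ^ (p * (p - 1) div 2)"
    have nm: "n - p = m" unfolding p_def using m by simp
    have G1: "T * (PD ^ p * (\<Prod>k\<in>?N. Ds k - \<xi>)) * VV n Ds = R * c"
      using G[of p] unfolding prodp nm T_def R_def c_def by (simp add: p_def)
    have "(T * PD ^ p) * Q = T * (PD ^ p * (\<Prod>k\<in>?N. Ds k - \<xi>)) * VV n Ds"
      unfolding Q_def by (simp only: mult.assoc)
    also have "\<dots> = R * c" by (rule G1)
    also have "\<dots> = (T0 * Q) * c" using Gn unfolding T0_def by simp
    also have "\<dots> = (T0 * c) * Q" by (simp only: ac_simps)
    finally have "T * PD ^ p = T0 * c" using Q0 by (rule mult_right_cancel[THEN iffD1, rotated])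
    then have "T = T0 * c / PD ^ p" using PD0 by (simp add: eq_divide_eq)
    also have "\<dots> = (-K) ^ (p * (p - 1) div 2) * (\<xi> / PD) ^ p * T0"
      unfolding c_def by (simp add: power_divide)
    finally show "Theta D Ds \<phi> n (int m) f = (- K) ^ ((n - m) * (n - m - 1) div 2) * (\<xi> / (\<Prod>k=1..n. D k)) ^ (n - m) * Theta D Ds \<phi> n (int n) f"
      unfolding T_def T0_def p_def PD_def .
  qed
  have part3: "\<xi> = 1 \<longrightarrow> Theta D Ds \<phi> n (-1) f =
           (- K) ^ ((n + 1) * n div 2) * (\<xi> / (\<Prod>k=1..n. D k)) ^ (n + 1)
           * Theta D Ds \<phi> n (int n) f"
  proof
    assume xi: "\<xi> = 1"
    have w: "\<forall>k\<in>?N. sfun D Ds k \<xi> * ee \<phi> (-1) k * (Ds k / D k)^(n-1) = (Ds k ^ Suc n * (D k - 1)) / (D k ^ Suc n * (Ds k - 1))"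
    proof
      fix k assume k: "k \<in> ?N"
      let ?x = "Ds k / D k"
      have X: "?x * ?x * ?x ^ (n - 1) = ?x ^ Suc n"
      proof -
        have h: "?x * ?x ^ (n - 1) = ?x ^ n" using n(1) by (simp add: power_Suc[symmetric])
        show ?thesis by (simp only: mult.assoc h power_Suc)
      qed
      have "sfun D Ds k \<xi> * ee \<phi> (-1) k * (Ds k / D k)^(n-1) = (?x * ?x * ?x ^ (n - 1)) * ((D k - 1) / (Ds k - 1))"
        unfolding sfun_def ee_m1[OF k] xi by (simp only: ac_simps)
      also have "\<dots> = ?x ^ Suc n * ((D k - 1) / (Ds k - 1))" unfolding X ..
      also have "\<dots> = (Ds k ^ Suc n * (D k - 1)) / (D k ^ Suc n * (Ds k - 1))" by (simp add: power_divide)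
      finally show "sfun D Ds k \<xi> * ee \<phi> (-1) k * (Ds k / D k)^(n-1) = (Ds k ^ Suc n * (D k - 1)) / (D k ^ Suc n * (Ds k - 1))" .
    qed
    have b0: "\<forall>k\<in>?N. D k ^ Suc n * (Ds k - 1) \<noteq> 0" using nzD xi by auto
    have ent: "\<forall>k\<in>?N. \<forall>i<n. D k ^ Suc n * (Ds k - 1) * Ds k ^ i - Ds k ^ Suc n * (D k - 1) * D k ^ i = (Ds k - D k) * poly (EF K n i) (D k * Ds k)"
    proof (intro ballI allI impI)
      fix k i assume k: "k \<in> ?N" and i: "i < n"
      show "D k ^ Suc n * (Ds k - 1) * Ds k ^ i - Ds k ^ Suc n * (D k - 1) * D k ^ i = (Ds k - D k) * poly (EF K n i) (D k * Ds k)"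
        using EF_eval[OF rel[OF k] i] by (simp add: ac_simps)
    qed
    have deg: "\<forall>i<n. degree (EF K n i) < n" using deg_EF by auto
    have K3: "Theta D Ds \<phi> n (-1) (ampl D Ds n \<xi>) * (\<Prod>k\<in>?N. D k ^ Suc n * (Ds k - 1)) * VV n Ds
       = (\<Prod>k\<in>?N. Ds k - D k) * VV n (\<lambda>k. D k * Ds k) * det (mat n n (\<lambda>(l,i). coeff (EF K n i) l))"
      by (rule key[OF a0 nz w b0 ent deg])
    define T where "T = Theta D Ds \<phi> n (-1) f"
    define T0 where "T0 = Theta D Ds \<phi> n (int n) f"
    define c where "c = (-K) ^ ((n + 1) * n div 2)"
    have pr: "(\<Prod>k\<in>?N. D k ^ Suc n * (Ds k - 1)) = PD ^ Suc n * (\<Prod>k\<in>?N. Ds k - \<xi>)"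
      using prodp[of "Suc n"] xi by simp
    have G3: "T * (PD ^ Suc n * (\<Prod>k\<in>?N. Ds k - \<xi>)) * VV n Ds = R * c"
      using K3 unfolding pr detC_EF T_def f_def L_def R_def c_def .
    have "(T * PD ^ Suc n) * Q = T * (PD ^ Suc n * (\<Prod>k\<in>?N. Ds k - \<xi>)) * VV n Ds"
      unfolding Q_def by (simp only: mult.assoc)
    also have "\<dots> = R * c" by (rule G3)
    also have "\<dots> = (T0 * Q) * c" using Gn unfolding T0_def by simp
    also have "\<dots> = (T0 * c) * Q" by (simp only: ac_simps)
    finally have "T * PD ^ Suc n = T0 * c" using Q0 by (rule mult_right_cancel[THEN iffD1, rotated])
    then have "T = T0 * c / PD ^ Suc n" using PD0 by (simp add: eq_divide_eq)
    also have "\<dots> = (-K) ^ ((n + 1) * n div 2) * (\<xi> / PD) ^ (n + 1) * T0"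
      unfolding c_def xi by (simp add: power_divide)
    finally show "Theta D Ds \<phi> n (-1) f = (- K) ^ ((n + 1) * n div 2) * (\<xi> / (\<Prod>k=1..n. D k)) ^ (n + 1) * Theta D Ds \<phi> n (int n) f"
      unfolding T_def T0_def PD_def .
  qed
  show ?thesis using part1 part2 part3 by blast
qed


end
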